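(* Suppose that $G$ is a closed graph on a compact metrizable space $X$. If $X$ can be written as a countable union of $G$-loose sets, then the poset $P_G$ is c.c.c. and adds no dominating real.
   Context: A graph $G$ on $X$ is a symmetric irreflexive relation, closed if closed in $(X\times X)\setminus$ diagonal. A set $A\subset X$ is $G$-loose if every $x\in X$ has an open neighborhood containing no elements of $A$ that are $G$-connected to $x$. A $G$-anticlique is a set with no two distinct $G$-connected points. $P_G$ is the poset of pairs $p=\langle a_p,o_p\rangle$ with $a_p\subset X$ a finite $G$-anticlique and $o_p\supset a_p$ open, ordered by $q\leq p$ iff $a_p\subset a_q$ and $o_q\subset o_p$. *)

theory Defs
  imports "HOL-Analysis.Analysis"
begin

definition graph_on :: "'a topology \<Rightarrow> ('a \<Rightarrow> 'a \<Rightarrow> bool) \<Rightarrow> bool" where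
  "graph_on T G \<longleftrightarrow>
     (\<forall>x y. G x y \<longrightarrow> x \<in> topspace T \<and> y \<in> topspace T) \<and>
     (\<forall>x y. G x y \<longrightarrow> G y x) \<and> (\<forall>x. \<not> G x x)"

definition closed_graph :: "'a topology \<Rightarrow> ('a \<Rightarrow> 'a \<Rightarrow> bool) \<Rightarrow> bool" where
  "closed_graph T G \<longleftrightarrow> graph_on T G \<and>
     closedin (subtopology (prod_topology T T)
                 {(x, y). x \<in> topspace T \<and> y \<in> topspace T \<and> x \<noteq> y})
              {(x, y). G x y}"

definition G_loose :: "'a topology \<Rightarrow> ('a \<Rightarrow> 'a \<Rightarrow> bool) \<Rightarrow> 'a set \<Rightarrow> bool" where
  "G_loose T G A \<longleftrightarrow> A \<subseteq> topspace T \<and>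
     (\<forall>x\<in>topspace T. \<exists>U. openin T U \<and> x \<in> U \<and> (\<forall>a\<in>A \<inter> U. \<not> G x a))"

definition G_anticlique :: "('a \<Rightarrow> 'a \<Rightarrow> bool) \<Rightarrow> 'a set \<Rightarrow> bool" where
  "G_anticlique G A \<longleftrightarrow> (\<forall>x\<in>A. \<forall>y\<in>A. x \<noteq> y \<longrightarrow> \<not> G x y)"

definition PG :: "'a topology \<Rightarrow> ('a \<Rightarrow> 'a \<Rightarrow> bool) \<Rightarrow> ('a set \<times> 'a set) set" where
  "PG T G = {(a, U). finite a \<and> G_anticlique G a \<and> openin T U \<and> a \<subseteq> U}"

definition PG_le :: "('a set \<times> 'a set) \<Rightarrow> ('a set \<times> 'a set) \<Rightarrow> bool" where
  "PG_le q p \<longleftrightarrow> fst p \<subseteq> fst q \<and> snd q \<subseteq> snd p"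

definition compatible :: "'p set \<Rightarrow> ('p \<Rightarrow> 'p \<Rightarrow> bool) \<Rightarrow> 'p \<Rightarrow> 'p \<Rightarrow> bool" where
  "compatible P le p q \<longleftrightarrow> (\<exists>r\<in>P. le r p \<and> le r q)"

definition antichain :: "'p set \<Rightarrow> ('p \<Rightarrow> 'p \<Rightarrow> bool) \<Rightarrow> 'p set \<Rightarrow> bool" where
  "antichain P le A \<longleftrightarrow> A \<subseteq> P \<and>
     (\<forall>p\<in>A. \<forall>q\<in>A. p \<noteq> q \<longrightarrow> \<not> compatible P le p q)"

definition ccc :: "'p set \<Rightarrow> ('p \<Rightarrow> 'p \<Rightarrow> bool) \<Rightarrow> bool" where
  "ccc P le \<longleftrightarrow> (\<forall>A. antichain P le A \<longrightarrow> countable A)"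

text \<open>A P-name for an element of \<omega>^\<omega>, coded (as usual) by the sets
  \<sigma> n m of conditions forcing "f(n) = m": for each n, conditions in
  different \<sigma> n m are incompatible, and \<Union>_m \<sigma> n m is predense.\<close>
definition real_name :: "'p set \<Rightarrow> ('p \<Rightarrow> 'p \<Rightarrow> bool) \<Rightarrow> (nat \<Rightarrow> nat \<Rightarrow> 'p set) \<Rightarrow> bool" where
  "real_name P le \<sigma> \<longleftrightarrow>
     (\<forall>n m. \<sigma> n m \<subseteq> P) \<and>
     (\<forall>n m m'. m \<noteq> m' \<longrightarrow> (\<forall>p\<in>\<sigma> n m. \<forall>p'\<in>\<sigma> n m'. \<not> compatible P le p p')) \<and>
     (\<forall>n. \<forall>r\<in>P. \<exists>s\<in>P. le s r \<and> (\<exists>m. \<exists>t\<in>\<sigma> n m. le s t))"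

definition forces_ge :: "'p set \<Rightarrow> ('p \<Rightarrow> 'p \<Rightarrow> bool) \<Rightarrow> 'p \<Rightarrow> (nat \<Rightarrow> nat \<Rightarrow> 'p set) \<Rightarrow> nat \<Rightarrow> nat \<Rightarrow> bool" where
  "forces_ge P le q \<sigma> n k \<longleftrightarrow>
     (\<forall>r\<in>P. le r q \<longrightarrow> (\<exists>s\<in>P. le s r \<and> (\<exists>m\<ge>k. \<exists>t\<in>\<sigma> n m. le s t)))"

text \<open>q forces "g \<le>* f", i.e. "\<exists>N. \<forall>n\<ge>N. g(n) \<le> f(n)", for a ground-model g.\<close>
definition forces_dominates :: "'p set \<Rightarrow> ('p \<Rightarrow> 'p \<Rightarrow> bool) \<Rightarrow> 'p \<Rightarrow> (nat \<Rightarrow> nat \<Rightarrow> 'p set) \<Rightarrow> (nat \<Rightarrow> nat) \<Rightarrow> bool" where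
  "forces_dominates P le q \<sigma> g \<longleftrightarrow>
     (\<forall>r\<in>P. le r q \<longrightarrow> (\<exists>s\<in>P. le s r \<and> (\<exists>N. \<forall>n\<ge>N. forces_ge P le s \<sigma> n (g n))))"

definition adds_dominating_real :: "'p set \<Rightarrow> ('p \<Rightarrow> 'p \<Rightarrow> bool) \<Rightarrow> bool" where
  "adds_dominating_real P le \<longleftrightarrow>
     (\<exists>\<sigma>. real_name P le \<sigma> \<and> (\<exists>q\<in>P. \<forall>g. forces_dominates P le q \<sigma> g))"

end

theory Submission
  imports Defs
begin

lemma PG_le_trans: "PG_le r s \<Longrightarrow> PG_le s t \<Longrightarrow> PG_le r t"
  unfolding PG_le_def by auto

lemma PG_le_refl: "PG_le p p"
  unfolding PG_le_def by auto

lemma compat_PG: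
  assumes "(a,U) \<in> PG T G" "(b,V) \<in> PG T G" "G_anticlique G (a \<union> b)" "a \<subseteq> V" "b \<subseteq> U"
  shows "compatible (PG T G) PG_le (a,U) (b,V)"
  unfolding compatible_def
proof (rule bexI[of _ "(a \<union> b, U \<inter> V)"])
  show "(a \<union> b, U \<inter> V) \<in> PG T G" using assms unfolding PG_def by auto
qed (auto simp: PG_le_def)

lemma nonedge_nbhd:
  assumes cg: "closed_graph T G" and x: "x \<in> topspace T" and z: "z \<in> topspace T"
    and ne: "x \<noteq> z" and ng: "\<not> G x z"
  shows "\<exists>V W. openin T V \<and> openin T W \<and> x \<in> V \<and> z \<in> W \<and> (\<forall>u\<in>V. \<forall>w\<in>W. \<not> G u w)"
proof -
  define D where "D = {(x, y). x \<in> topspace T \<and> y \<in> topspace T \<and> x \<noteq> y}"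
  define E where "E = {(x, y). G x y}"
  have go: "graph_on T G" and cl: "closedin (subtopology (prod_topology T T) D) E"
    using cg unfolding closed_graph_def D_def E_def by auto
  have "openin (subtopology (prod_topology T T) D) (D - E)"
  proof -
    have "topspace (subtopology (prod_topology T T) D) = D"
      unfolding D_def by auto
    then show ?thesis using cl unfolding closedin_def by simp
  qed
  then obtain Op where Op: "openin (prod_topology T T) Op" "D - E = Op \<inter> D"
    unfolding openin_subtopology by blast
  have xz: "(x, z) \<in> Op" using Op x z ne ng unfolding D_def E_def by auto
  obtain V W where VW: "openin T V" "openin T W" "x \<in> V" "z \<in> W" "V \<times> W \<subseteq> Op"
    using Op(1)[unfolded openin_prod_topology_alt, rule_format, OF xz] by blast
  have "\<not> G u w" if "u \<in> V" "w \<in> W" for u w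
  proof
    assume g: "G u w"
    then have "(u, w) \<in> D" using go unfolding graph_on_def D_def by auto
    moreover have "(u, w) \<in> Op" using VW that by auto
    ultimately have "(u, w) \<in> D - E" using Op by auto
    then show False using g unfolding E_def by auto
  qed
  then show ?thesis using VW by blast
qed

lemma finite_nbhd_Inter:
  assumes "finite S" "y \<in> topspace T"
    and "\<forall>z\<in>S. \<exists>N. openin T N \<and> y \<in> N \<and> (\<forall>w\<in>N. Q z w)"
  shows "\<exists>N. openin T N \<and> y \<in> N \<and> (\<forall>z\<in>S. \<forall>w\<in>N. Q z w)"
  using assms
proof (induction S rule: finite_induct)
  case empty
  then show ?case by (intro exI[of _ "topspace T"]) auto
next
  case (insert a S)
  then obtain N1 where N1: "openin T N1" "y \<in> N1" "\<forall>z\<in>S. \<forall>w\<in>N1. Q z w" by auto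
  obtain N2 where N2: "openin T N2" "y \<in> N2" "\<forall>w\<in>N2. Q a w" using insert.prems by auto
  show ?case using N1 N2 by (intro exI[of _ "N1 \<inter> N2"]) auto
qed

lemma cluster:
  fixes x :: "nat \<Rightarrow> 'i \<Rightarrow> 'a"
  assumes cpt: "compact_space T" and fin: "finite I"
    and xs: "\<And>m i. i \<in> I \<Longrightarrow> x m i \<in> topspace T"
  shows "\<exists>y. (\<forall>i\<in>I. y i \<in> topspace T) \<and>
     (\<forall>W M. (\<forall>i\<in>I. openin T (W i) \<and> y i \<in> W i) \<longrightarrow> (\<exists>m\<ge>M. \<forall>i\<in>I. x m i \<in> W i))"
proof -
  define PT where "PT = product_topology (\<lambda>i. T) I"
  define z where "z m = restrict (x m) I" for m
  have zt: "z m \<in> topspace PT" for m unfolding PT_def z_def using xs by auto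
  have cP: "compact_space PT" unfolding PT_def
    using cpt by (simp add: compact_space_product_topology)
  define C where "C n = PT closure_of (z ` {n..})" for n
  have c1: "closedin PT (C n)" for n unfolding C_def by simp
  have c2: "C n \<noteq> {}" for n
    proof -
      have s1: "z ` {n..} \<subseteq> topspace PT" using zt by auto
      have "z n \<in> z ` {n..}" by (intro imageI) auto
      then have "z n \<in> C n" unfolding C_def using closure_of_subset[OF s1] by blast
      then show ?thesis by auto
    qed
  have c3: "decseq C" unfolding decseq_def C_def
      by (auto intro!: closure_of_mono)
  have "(\<Inter>n. C n) \<noteq> {}" using compact_space_imp_nest[OF cP c1 c2 c3] .
  then obtain y where y: "\<And>n. y \<in> C n" by auto
  have yt: "y \<in> topspace PT" using y[of 0] closure_of_subset_topspace[of PT "z ` {0..}"] unfolding C_def by blast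
  show ?thesis
  proof (intro exI[of _ y] conjI allI impI)
    show "\<forall>i\<in>I. y i \<in> topspace T" using yt unfolding PT_def by auto
    fix W M assume W: "\<forall>i\<in>I. openin T (W i) \<and> y i \<in> W i"
    have op: "openin PT (PiE I W)" unfolding PT_def
      using W fin by (simp add: openin_PiE_gen)
    have "y \<in> PiE I W" using yt W unfolding PT_def by (auto simp: PiE_iff)
    then obtain w where "w \<in> z ` {M..}" "w \<in> PiE I W"
      using y[of M] op unfolding C_def in_closure_of by blast
    then show "\<exists>m\<ge>M. \<forall>i\<in>I. x m i \<in> W i" unfolding z_def by (auto simp: Pi_iff)
  qed
qed

lemma (in Metric_space) compact_imp_second_countable:
  assumes "compact_space mtopology"
  shows "second_countable mtopology"
proof -
  have "\<exists>F. finite F \<and> F \<subseteq> M \<and> M \<subseteq> (\<Union>c\<in>F. mball c (1 / Suc n))" for n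
  proof -
    have cov: "M \<subseteq> (\<Union>c\<in>M. mball c (1 / Suc n))" by auto
    have "\<exists>\<F>. finite \<F> \<and> \<F> \<subseteq> (\<lambda>c. mball c (1 / Suc n)) ` M \<and> M \<subseteq> \<Union>\<F>"
      using cov assms[unfolded compact_space_alt, rule_format, of "(\<lambda>c. mball c (1 / Suc n)) ` M"]
      by auto
    then obtain \<F> where "finite \<F>" "\<F> \<subseteq> (\<lambda>c. mball c (1 / Suc n)) ` M" "M \<subseteq> \<Union>\<F>" by blast
    then show ?thesis by (metis finite_subset_image)
  qed
  then obtain F where F: "\<And>n. finite (F n) \<and> F n \<subseteq> M \<and> M \<subseteq> (\<Union>c\<in>F n. mball c (1 / Suc n))"
    by metis
  define B where "B = (\<Union>n. (\<lambda>c. mball c (1 / Suc n)) ` F n)"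
  have "countable B" unfolding B_def using F by (auto intro: countable_finite)
  moreover have "\<forall>V\<in>B. openin mtopology V" unfolding B_def by auto
  moreover have "\<exists>V\<in>B. x \<in> V \<and> V \<subseteq> U" if UU: "openin mtopology U" and xU: "x \<in> U" for U x
  proof -
    obtain r where r: "r > 0" "mball x r \<subseteq> U" using UU unfolding openin_mtopology using xU by blast
    have xM: "x \<in> M" using UU unfolding openin_mtopology using xU by blast
    obtain n where n: "2 / Suc n < r"
    proof -
      obtain n where "2 / r < real n" using reals_Archimedean2 by blast
      then have "2 / r < real (Suc n)" by simp
      then have "2 / real (Suc n) < r" using r(1)
        by (metis divide_less_eq mult.commute of_nat_0_less_iff zero_less_Suc)
      then show ?thesis using that by blast
    qed
    obtain c where c: "c \<in> F n" "x \<in> mball c (1 / Suc n)" using F[of n] xM by blast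
    have "mball c (1 / Suc n) \<subseteq> U"
    proof
      fix w assume w: "w \<in> mball c (1 / Suc n)"
      have "d x w \<le> d x c + d c w" using c w triangle by auto
      also have "\<dots> < 2 / Suc n" using c w by (auto simp: commute)
      finally have "w \<in> mball x r" using n w xM by auto
      then show "w \<in> U" using r by auto
    qed
    then show ?thesis using c unfolding B_def by blast
  qed
  ultimately show ?thesis unfolding second_countable_def by blast
qed

locale PGset =
  fixes T :: "'a topology" and G :: "'a \<Rightarrow> 'a \<Rightarrow> bool" and A :: "nat \<Rightarrow> 'a set"
    and Bs :: "'a set set"
  assumes cpt: "compact_space T" and reg: "regular_space T" and t1: "t1_space T"
    and cg: "closed_graph T G" and loose: "\<And>n. G_loose T G (A n)"
    and cover: "topspace T = (\<Union>n. A n)"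
    and Bc: "countable Bs" and Bo: "\<And>V. V \<in> Bs \<Longrightarrow> openin T V"
    and Bb: "\<And>U x. openin T U \<Longrightarrow> x \<in> U \<Longrightarrow> \<exists>V\<in>Bs. x \<in> V \<and> V \<subseteq> U"
begin

lemma go: "graph_on T G" using cg unfolding closed_graph_def by auto

lemma Gsym: "G x y \<Longrightarrow> G y x" using go unfolding graph_on_def by auto

lemma Girr: "\<not> G x x" using go unfolding graph_on_def by auto

lemma B_cl: "V \<in> Bs \<Longrightarrow> V \<subseteq> T closure_of V"
  by (intro closure_of_subset openin_subset Bo)

definition fits :: "'a set \<times> 'a set \<Rightarrow> (nat \<times> 'a set \<times> 'a set) set \<Rightarrow> bool" where
  "fits p \<tau> \<longleftrightarrow> (\<exists>h. \<tau> = h ` fst p \<and> inj_on h (fst p) \<and>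
     (\<forall>x\<in>fst p. x \<in> A (fst (h x)) \<and> x \<in> fst (snd (h x)) \<and> fst (snd (h x)) \<in> Bs \<and>
        snd (snd (h x)) \<in> Bs \<and> T closure_of (fst (snd (h x))) \<subseteq> snd (snd (h x)) \<and>
        snd (snd (h x)) \<subseteq> snd p \<and> (\<forall>w\<in>A (fst (h x)) \<inter> fst (snd (h x)). \<not> G x w)) \<and>
     (\<forall>x\<in>fst p. \<forall>x'\<in>fst p. x \<noteq> x' \<longrightarrow>
        (\<forall>u\<in>T closure_of (fst (snd (h x))). \<forall>w\<in>T closure_of (fst (snd (h x'))). \<not> G u w)))"

definition Ty :: "(nat \<times> 'a set \<times> 'a set) set set" where
  "Ty = {\<tau>. finite \<tau> \<and> \<tau> \<subseteq> UNIV \<times> Bs \<times> Bs}"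

lemma Ty_countable: "countable Ty"
  unfolding Ty_def by (intro countable_Collect_finite_subset) (use Bc in auto)

lemma Ty_ne: "Ty \<noteq> {}" unfolding Ty_def by auto

lemma fits_exists:
  assumes p: "p \<in> PG T G"
  shows "\<exists>\<tau>\<in>Ty. fits p \<tau>"
proof -
  obtain a U where pa: "p = (a, U)" by (cases p)
  have fa: "finite a" and ac: "G_anticlique G a" and oU: "openin T U" and aU: "a \<subseteq> U"
    using p unfolding pa PG_def by auto
  have aT: "a \<subseteq> topspace T" using aU openin_subset[OF oU] by auto
  have "\<forall>x\<in>a. \<exists>n. x \<in> A n" using aT cover by auto
  then have "\<exists>nn. \<forall>x\<in>a. x \<in> A (nn x)" by (rule bchoice)
  then obtain nn where nn0: "\<forall>x\<in>a. x \<in> A (nn x)" by blast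
  have nn: "\<And>x. x \<in> a \<Longrightarrow> x \<in> A (nn x)" using nn0 by blast
  have "\<forall>x\<in>a. \<exists>W. openin T W \<and> x \<in> W \<and> (\<forall>w\<in>A (nn x) \<inter> W. \<not> G x w)"
  proof
    fix x assume "x \<in> a"
    then have "x \<in> topspace T" using aT by auto
    moreover have "\<forall>y\<in>topspace T. \<exists>U. openin T U \<and> y \<in> U \<and> (\<forall>w\<in>A (nn x) \<inter> U. \<not> G y w)"
      using loose[of "nn x"] unfolding G_loose_def by (rule conjunct2)
    ultimately show "\<exists>W. openin T W \<and> x \<in> W \<and> (\<forall>w\<in>A (nn x) \<inter> W. \<not> G x w)"
      by blast
  qed
  then have "\<exists>W. \<forall>x\<in>a. openin T (W x) \<and> x \<in> W x \<and> (\<forall>w\<in>A (nn x) \<inter> W x. \<not> G x w)" by (rule bchoice)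
  then obtain W where W0: "\<forall>x\<in>a. openin T (W x) \<and> x \<in> W x \<and> (\<forall>w\<in>A (nn x) \<inter> W x. \<not> G x w)" by blast
  have W: "\<And>x. x \<in> a \<Longrightarrow> openin T (W x) \<and> x \<in> W x \<and> (\<forall>w\<in>A (nn x) \<inter> W x. \<not> G x w)"
    using W0 by blast
  have "\<forall>x x'. \<exists>VW. x \<in> a \<longrightarrow> x' \<in> a \<longrightarrow> x \<noteq> x' \<longrightarrow> openin T (fst VW) \<and> openin T (snd VW)
      \<and> x \<in> fst VW \<and> x' \<in> snd VW \<and> (\<forall>u\<in>fst VW. \<forall>w\<in>snd VW. \<not> G u w)"
  proof (intro allI)
    fix x x'
    show "\<exists>VW. x \<in> a \<longrightarrow> x' \<in> a \<longrightarrow> x \<noteq> x' \<longrightarrow> openin T (fst VW) \<and> openin T (snd VW)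
      \<and> x \<in> fst VW \<and> x' \<in> snd VW \<and> (\<forall>u\<in>fst VW. \<forall>w\<in>snd VW. \<not> G u w)"
    proof (cases "x \<in> a \<and> x' \<in> a \<and> x \<noteq> x'")
      case True
      then have "\<not> G x x'" using ac unfolding G_anticlique_def by auto
      then obtain V V' where "openin T V \<and> openin T V' \<and> x \<in> V \<and> x' \<in> V' \<and> (\<forall>u\<in>V. \<forall>w\<in>V'. \<not> G u w)"
        using nonedge_nbhd[OF cg, of x x'] True aT by blast
      then show ?thesis by (intro exI[of _ "(V, V')"]) auto
    next
      case False
      then show ?thesis by (intro exI[of _ "(topspace T, topspace T)"]) blast
    qed
  qed
  then have "\<forall>x. \<exists>f. \<forall>x'. x \<in> a \<longrightarrow> x' \<in> a \<longrightarrow> x \<noteq> x' \<longrightarrow> openin T (fst (f x')) \<and> openin T (snd (f x'))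
      \<and> x \<in> fst (f x') \<and> x' \<in> snd (f x') \<and> (\<forall>u\<in>fst (f x'). \<forall>w\<in>snd (f x'). \<not> G u w)"
    by (intro allI choice) blast
  then have "\<exists>VW. \<forall>x x'. x \<in> a \<longrightarrow> x' \<in> a \<longrightarrow> x \<noteq> x' \<longrightarrow> openin T (fst (VW x x')) \<and> openin T (snd (VW x x'))
      \<and> x \<in> fst (VW x x') \<and> x' \<in> snd (VW x x') \<and> (\<forall>u\<in>fst (VW x x'). \<forall>w\<in>snd (VW x x'). \<not> G u w)" by (rule choice)
  then obtain VW where VW0: "\<forall>x x'. x \<in> a \<longrightarrow> x' \<in> a \<longrightarrow> x \<noteq> x' \<longrightarrow> openin T (fst (VW x x')) \<and> openin T (snd (VW x x'))
      \<and> x \<in> fst (VW x x') \<and> x' \<in> snd (VW x x') \<and> (\<forall>u\<in>fst (VW x x'). \<forall>w\<in>snd (VW x x'). \<not> G u w)" by blast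
  have VW: "\<And>x x'. x \<in> a \<Longrightarrow> x' \<in> a \<Longrightarrow> x \<noteq> x' \<Longrightarrow> openin T (fst (VW x x')) \<and> openin T (snd (VW x x'))
      \<and> x \<in> fst (VW x x') \<and> x' \<in> snd (VW x x') \<and> (\<forall>u\<in>fst (VW x x'). \<forall>w\<in>snd (VW x x'). \<not> G u w)"
    using VW0 by blast
  have "\<forall>x\<in>a. \<exists>N. openin T N \<and> x \<in> N \<and> (\<forall>x'\<in>a - {x}. \<forall>w\<in>N.
      w \<in> fst (VW x x') \<and> w \<in> snd (VW x' x) \<and> w \<noteq> x')"
  proof
    fix x assume x: "x \<in> a"
    show "\<exists>N. openin T N \<and> x \<in> N \<and> (\<forall>x'\<in>a - {x}. \<forall>w\<in>N.
      w \<in> fst (VW x x') \<and> w \<in> snd (VW x' x) \<and> w \<noteq> x')"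
    proof (rule finite_nbhd_Inter)
      show "finite (a - {x})" using fa by auto
      show "x \<in> topspace T" using x aT by auto
      show "\<forall>z\<in>a - {x}. \<exists>N. openin T N \<and> x \<in> N \<and> (\<forall>w\<in>N. w \<in> fst (VW x z) \<and> w \<in> snd (VW z x) \<and> w \<noteq> z)"
      proof
        fix z assume z: "z \<in> a - {x}"
        have o0: "openin T (fst (VW x z) \<inter> snd (VW z x))"
          using VW[of x z] VW[of z x] x z by auto
        have o: "openin T (fst (VW x z) \<inter> snd (VW z x) - {z})"
          using o0 t1 unfolding t1_space_openin_delete_alt by blast
        show "\<exists>N. openin T N \<and> x \<in> N \<and> (\<forall>w\<in>N. w \<in> fst (VW x z) \<and> w \<in> snd (VW z x) \<and> w \<noteq> z)"
          by (rule exI[of _ "fst (VW x z) \<inter> snd (VW z x) - {z}"]) (use o VW[of x z] VW[of z x] x z in auto)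
      qed
    qed
  qed
  then have "\<exists>N. \<forall>x\<in>a. openin T (N x) \<and> x \<in> N x \<and> (\<forall>x'\<in>a - {x}. \<forall>w\<in>N x.
      w \<in> fst (VW x x') \<and> w \<in> snd (VW x' x) \<and> w \<noteq> x')" by (rule bchoice)
  then obtain N where N0: "\<forall>x\<in>a. openin T (N x) \<and> x \<in> N x \<and> (\<forall>x'\<in>a - {x}. \<forall>w\<in>N x.
      w \<in> fst (VW x x') \<and> w \<in> snd (VW x' x) \<and> w \<noteq> x')" by blast
  have N: "\<And>x. x \<in> a \<Longrightarrow> openin T (N x) \<and> x \<in> N x \<and> (\<forall>x'\<in>a - {x}. \<forall>w\<in>N x.
      w \<in> fst (VW x x') \<and> w \<in> snd (VW x' x) \<and> w \<noteq> x')"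
    using N0 by blast
  define O' where "O' x = U \<inter> W x \<inter> N x" for x
  have O': "openin T (O' x) \<and> x \<in> O' x" if "x \<in> a" for x
    using that N[of x] W[of x] oU aU unfolding O'_def by auto
  have "\<forall>x\<in>a. \<exists>C. C \<in> Bs \<and> x \<in> C \<and> C \<subseteq> O' x" using O' Bb by blast
  then have "\<exists>C. \<forall>x\<in>a. C x \<in> Bs \<and> x \<in> C x \<and> C x \<subseteq> O' x" by (rule bchoice)
  then obtain C where C0: "\<forall>x\<in>a. C x \<in> Bs \<and> x \<in> C x \<and> C x \<subseteq> O' x" by blast
  have C: "\<And>x. x \<in> a \<Longrightarrow> C x \<in> Bs \<and> x \<in> C x \<and> C x \<subseteq> O' x" using C0 by blast
  have nb: "neighbourhood_base_of (closedin T) T" using reg neighbourhood_base_of_closedin by blast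
  have "\<forall>x\<in>a. \<exists>B. B \<in> Bs \<and> x \<in> B \<and> T closure_of B \<subseteq> C x"
  proof
    fix x assume x: "x \<in> a"
    obtain U' K where UK: "openin T U'" "closedin T K" "x \<in> U'" "U' \<subseteq> K" "K \<subseteq> C x"
      using nb[unfolded neighbourhood_base_of] C[OF x] Bo by meson
    obtain B where B: "B \<in> Bs" "x \<in> B" "B \<subseteq> U'" using Bb[OF UK(1) UK(3)] by blast
    have "T closure_of B \<subseteq> K" using B UK by (intro closure_of_minimal) auto
    then show "\<exists>B. B \<in> Bs \<and> x \<in> B \<and> T closure_of B \<subseteq> C x" using B UK by blast
  qed
  then have "\<exists>B. \<forall>x\<in>a. B x \<in> Bs \<and> x \<in> B x \<and> T closure_of (B x) \<subseteq> C x" by (rule bchoice)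
  then obtain B where B0: "\<forall>x\<in>a. B x \<in> Bs \<and> x \<in> B x \<and> T closure_of (B x) \<subseteq> C x" by blast
  have B: "\<And>x. x \<in> a \<Longrightarrow> B x \<in> Bs \<and> x \<in> B x \<and> T closure_of (B x) \<subseteq> C x" using B0 by blast
  define h where "h x = (nn x, B x, C x)" for x
  have clO: "T closure_of (B x) \<subseteq> O' x" if "x \<in> a" for x using B[OF that] C[OF that] by auto
  have Bcl: "B x \<subseteq> T closure_of (B x)" if "x \<in> a" for x using B[OF that] B_cl by auto
  show ?thesis
  proof (rule bexI[of _ "h ` a"])
    show "h ` a \<in> Ty" unfolding Ty_def h_def using fa B C by auto
    have inj: "inj_on h a"
    proof (rule inj_onI)
      fix x x' assume xx: "x \<in> a" "x' \<in> a" "h x = h x'"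
      show "x = x'"
      proof (rule ccontr)
        assume ne: "x \<noteq> x'"
        have "x' \<in> B x" using xx B[of x'] unfolding h_def by auto
        then have "x' \<in> N x" using Bcl[OF xx(1)] clO[OF xx(1)] unfolding O'_def by auto
        then show False using N[OF xx(1)] xx ne by auto
      qed
    qed
    have P2: "x \<in> A (fst (h x)) \<and> x \<in> fst (snd (h x)) \<and> fst (snd (h x)) \<in> Bs \<and>
        snd (snd (h x)) \<in> Bs \<and> T closure_of (fst (snd (h x))) \<subseteq> snd (snd (h x)) \<and>
        snd (snd (h x)) \<subseteq> U \<and> (\<forall>w\<in>A (fst (h x)) \<inter> fst (snd (h x)). \<not> G x w)"
      if x: "x \<in> a" for x
    proof (intro conjI)
      show "x \<in> A (fst (h x))" using nn[OF x] unfolding h_def by auto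
      show "x \<in> fst (snd (h x))" "fst (snd (h x)) \<in> Bs" "snd (snd (h x)) \<in> Bs"
        "T closure_of fst (snd (h x)) \<subseteq> snd (snd (h x))"
        using B[OF x] C[OF x] unfolding h_def by auto
      show "snd (snd (h x)) \<subseteq> U" using C[OF x] unfolding h_def O'_def by auto
      have "B x \<subseteq> W x" using Bcl[OF x] clO[OF x] unfolding O'_def by auto
      then show "\<forall>w\<in>A (fst (h x)) \<inter> fst (snd (h x)). \<not> G x w"
        using W[OF x] unfolding h_def by auto
    qed
    have P3: "\<forall>u\<in>T closure_of (fst (snd (h x))). \<forall>w\<in>T closure_of (fst (snd (h x'))). \<not> G u w"
      if x: "x \<in> a" and x': "x' \<in> a" and ne: "x \<noteq> x'" for x x'
    proof (intro ballI)
      fix u w assume u: "u \<in> T closure_of fst (snd (h x))" and w: "w \<in> T closure_of fst (snd (h x'))"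
      have "u \<in> N x" using u clO[OF x] unfolding h_def O'_def by auto
      then have "u \<in> fst (VW x x')" using N[OF x] x' ne by auto
      moreover have "w \<in> N x'" using w clO[OF x'] unfolding h_def O'_def by auto
      then have "w \<in> snd (VW x x')" using N[OF x'] x ne by auto
      ultimately show "\<not> G u w" using VW[OF x x' ne] by auto
    qed
    show "fits p (h ` a)" unfolding fits_def pa fst_conv snd_conv
    proof (intro exI[of _ h] conjI)
      show "h ` a = h ` a" by (rule refl)
      show "inj_on h a" by (rule inj)
      show "\<forall>x\<in>a. x \<in> A (fst (h x)) \<and> x \<in> fst (snd (h x)) \<and> fst (snd (h x)) \<in> Bs \<and>
        snd (snd (h x)) \<in> Bs \<and> T closure_of (fst (snd (h x))) \<subseteq> snd (snd (h x)) \<and>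
        snd (snd (h x)) \<subseteq> U \<and> (\<forall>w\<in>A (fst (h x)) \<inter> fst (snd (h x)). \<not> G x w)"
      proof
        fix x assume "x \<in> a" then show "x \<in> A (fst (h x)) \<and> x \<in> fst (snd (h x)) \<and> fst (snd (h x)) \<in> Bs \<and>
        snd (snd (h x)) \<in> Bs \<and> T closure_of (fst (snd (h x))) \<subseteq> snd (snd (h x)) \<and>
        snd (snd (h x)) \<subseteq> U \<and> (\<forall>w\<in>A (fst (h x)) \<inter> fst (snd (h x)). \<not> G x w)" by (rule P2)
      qed
      show "\<forall>x\<in>a. \<forall>x'\<in>a. x \<noteq> x' \<longrightarrow>
        (\<forall>u\<in>T closure_of (fst (snd (h x))). \<forall>w\<in>T closure_of (fst (snd (h x'))). \<not> G u w)"
      proof (rule ballI, rule ballI, rule impI)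
        fix x x' assume "x \<in> a" "x' \<in> a" "x \<noteq> x'"
        then show "\<forall>u\<in>T closure_of (fst (snd (h x))). \<forall>w\<in>T closure_of (fst (snd (h x'))). \<not> G u w"
          by (rule P3)
      qed
    qed
  qed
qed

lemma fits_D:
  assumes "fits (a, U) \<tau>"
  obtains h where "\<tau> = h ` a" "inj_on h a"
    "\<And>x. x \<in> a \<Longrightarrow> x \<in> A (fst (h x)) \<and> x \<in> fst (snd (h x)) \<and> fst (snd (h x)) \<in> Bs \<and>
        snd (snd (h x)) \<in> Bs \<and> T closure_of (fst (snd (h x))) \<subseteq> snd (snd (h x)) \<and>
        snd (snd (h x)) \<subseteq> U \<and> (\<forall>w\<in>A (fst (h x)) \<inter> fst (snd (h x)). \<not> G x w)"
    "\<And>x x'. x \<in> a \<Longrightarrow> x' \<in> a \<Longrightarrow> x \<noteq> x' \<Longrightarrow>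
        (\<forall>u\<in>T closure_of (fst (snd (h x))). \<forall>w\<in>T closure_of (fst (snd (h x'))). \<not> G u w)"
  using assms unfolding fits_def fst_conv snd_conv
  by (elim exE conjE) (rule that, assumption, assumption, erule (1) bspec, blast)

lemma fits_cross:
  assumes fp: "fits (a, U) \<tau>" and fq: "fits (b, V) \<tau>" and x: "x \<in> a" and y: "y \<in> b"
  shows "\<not> G x y \<and> x \<in> V"
proof -
  obtain h where h: "\<tau> = h ` a" "inj_on h a"
    "\<And>x. x \<in> a \<Longrightarrow> x \<in> A (fst (h x)) \<and> x \<in> fst (snd (h x)) \<and> fst (snd (h x)) \<in> Bs \<and>
        snd (snd (h x)) \<in> Bs \<and> T closure_of (fst (snd (h x))) \<subseteq> snd (snd (h x)) \<and>
        snd (snd (h x)) \<subseteq> U \<and> (\<forall>w\<in>A (fst (h x)) \<inter> fst (snd (h x)). \<not> G x w)"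
    "\<And>x x'. x \<in> a \<Longrightarrow> x' \<in> a \<Longrightarrow> x \<noteq> x' \<Longrightarrow>
        (\<forall>u\<in>T closure_of (fst (snd (h x))). \<forall>w\<in>T closure_of (fst (snd (h x'))). \<not> G u w)"
    using fits_D[OF fp] by blast
  obtain k where k: "\<tau> = k ` b" "inj_on k b"
    "\<And>x. x \<in> b \<Longrightarrow> x \<in> A (fst (k x)) \<and> x \<in> fst (snd (k x)) \<and> fst (snd (k x)) \<in> Bs \<and>
        snd (snd (k x)) \<in> Bs \<and> T closure_of (fst (snd (k x))) \<subseteq> snd (snd (k x)) \<and>
        snd (snd (k x)) \<subseteq> V \<and> (\<forall>w\<in>A (fst (k x)) \<inter> fst (snd (k x)). \<not> G x w)"
    "\<And>x x'. x \<in> b \<Longrightarrow> x' \<in> b \<Longrightarrow> x \<noteq> x' \<Longrightarrow>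
        (\<forall>u\<in>T closure_of (fst (snd (k x))). \<forall>w\<in>T closure_of (fst (snd (k x'))). \<not> G u w)"
    using fits_D[OF fq] by blast
  have "h x \<in> k ` b" using h(1) k(1) x by auto
  then obtain y' where y': "y' \<in> b" "h x = k y'" by auto
  have xcl: "x \<in> T closure_of (fst (snd (h x)))" using h(3)[OF x] B_cl by blast
  have "T closure_of (fst (snd (h x))) \<subseteq> V"
    using k(3)[OF y'(1)] y'(2) by (metis (no_types, lifting) order_trans)
  then have xV: "x \<in> V" using xcl by blast
  have "k y \<in> h ` a" using h(1) k(1) y by auto
  then obtain x' where x': "x' \<in> a" "k y = h x'" by auto
  have ky: "y \<in> A (fst (k y)) \<and> y \<in> fst (snd (k y)) \<and> fst (snd (k y)) \<in> Bs" using k(3)[OF y] by blast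
  have "\<not> G x y"
  proof (cases "x' = x")
    case True
    then have "y \<in> A (fst (h x)) \<inter> fst (snd (h x))" using ky x' by auto
    then show ?thesis using h(3)[OF x] by blast
  next
    case False
    have "y \<in> fst (snd (h x'))" using ky x' by auto
    moreover have "fst (snd (h x')) \<in> Bs" using ky x' by auto
    ultimately have "y \<in> T closure_of (fst (snd (h x')))" using B_cl by blast
    then show ?thesis using h(4)[OF x x'(1)] False xcl by blast
  qed
  then show ?thesis using xV by blast
qed

lemma fits_compat:
  assumes p: "p \<in> PG T G" and q: "q \<in> PG T G" and fp: "fits p \<tau>" and fq: "fits q \<tau>"
  shows "compatible (PG T G) PG_le p q"
proof -
  obtain a U where pa: "p = (a, U)" by (cases p)
  obtain b V where qb: "q = (b, V)" by (cases q)
  have c1: "\<And>x y. x \<in> a \<Longrightarrow> y \<in> b \<Longrightarrow> \<not> G x y \<and> x \<in> V"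
    by (rule fits_cross[OF fp[unfolded pa] fq[unfolded qb]])
  have c2: "\<And>x y. x \<in> b \<Longrightarrow> y \<in> a \<Longrightarrow> \<not> G x y \<and> x \<in> U"
    by (rule fits_cross[OF fq[unfolded qb] fp[unfolded pa]])
  obtain h where h: "\<tau> = h ` a" using fits_D[OF fp[unfolded pa]] by blast
  obtain k where k: "\<tau> = k ` b" using fits_D[OF fq[unfolded qb]] by blast
  note hk = h k
  have aa: "G_anticlique G a" and bb: "G_anticlique G b"
    using p q unfolding pa qb PG_def by auto
  have "G_anticlique G (a \<union> b)"
    unfolding G_anticlique_def
  proof (intro ballI impI)
    fix x y assume x: "x \<in> a \<union> b" and y: "y \<in> a \<union> b" and ne: "x \<noteq> y"
    show "\<not> G x y"
    proof (cases "x \<in> a")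
      case True
      show ?thesis
      proof (cases "y \<in> a")
        case True
        then show ?thesis using aa \<open>x \<in> a\<close> ne unfolding G_anticlique_def by blast
      next
        case False
        then show ?thesis using c1 \<open>x \<in> a\<close> y by blast
      qed
    next
      case False
      then have xb: "x \<in> b" using x by auto
      show ?thesis
      proof (cases "y \<in> a")
        case True
        then show ?thesis using c2 xb by blast
      next
        case False
        then show ?thesis using bb xb y ne unfolding G_anticlique_def by blast
      qed
    qed
  qed
  moreover have "a \<subseteq> V"
  proof
    fix x assume x: "x \<in> a"
    show "x \<in> V"
    proof (cases "b = {}")
      case True
      have "\<tau> = {}" using hk True by simp
      then have "a = {}" using hk by simp
      then show ?thesis using x by auto
    next
      case False
      then obtain y where "y \<in> b" by auto
      then show ?thesis using c1 x by blast
    qed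
  qed
  moreover have "b \<subseteq> U"
  proof
    fix x assume x: "x \<in> b"
    show "x \<in> U"
    proof (cases "a = {}")
      case True
      have "\<tau> = {}" using hk True by simp
      then have "b = {}" using hk by simp
      then show ?thesis using x by auto
    next
      case False
      then obtain y where "y \<in> a" by auto
      then show ?thesis using c2 x by blast
    qed
  qed
  ultimately show ?thesis using compat_PG p q unfolding pa qb by blast
qed

end

context PGset begin

lemma fits_limit:
  fixes ps :: "nat \<Rightarrow> 'a set \<times> 'a set"
  assumes ps: "\<And>m. ps m \<in> PG T G" and fps: "\<And>m. fits (ps m) \<tau>"
  shows "\<exists>p\<in>PG T G. \<forall>s\<in>PG T G. PG_le s p \<longrightarrow> (\<forall>M. \<exists>m\<ge>M. compatible (PG T G) PG_le s (ps m))"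
proof -
  define a where "a m = fst (ps m)" for m
  define U where "U m = snd (ps m)" for m
  have psa: "ps m = (a m, U m)" for m unfolding a_def U_def by simp
  have "\<forall>m. \<exists>h. \<tau> = h ` a m \<and> inj_on h (a m) \<and>
     (\<forall>x\<in>a m. x \<in> A (fst (h x)) \<and> x \<in> fst (snd (h x)) \<and> fst (snd (h x)) \<in> Bs \<and>
        snd (snd (h x)) \<in> Bs \<and> T closure_of (fst (snd (h x))) \<subseteq> snd (snd (h x)) \<and>
        snd (snd (h x)) \<subseteq> U m \<and> (\<forall>w\<in>A (fst (h x)) \<inter> fst (snd (h x)). \<not> G x w)) \<and>
     (\<forall>x\<in>a m. \<forall>x'\<in>a m. x \<noteq> x' \<longrightarrow>
        (\<forall>u\<in>T closure_of (fst (snd (h x))). \<forall>w\<in>T closure_of (fst (snd (h x'))). \<not> G u w))"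
  proof
    fix m
    show "\<exists>h. \<tau> = h ` a m \<and> inj_on h (a m) \<and>
     (\<forall>x\<in>a m. x \<in> A (fst (h x)) \<and> x \<in> fst (snd (h x)) \<and> fst (snd (h x)) \<in> Bs \<and>
        snd (snd (h x)) \<in> Bs \<and> T closure_of (fst (snd (h x))) \<subseteq> snd (snd (h x)) \<and>
        snd (snd (h x)) \<subseteq> U m \<and> (\<forall>w\<in>A (fst (h x)) \<inter> fst (snd (h x)). \<not> G x w)) \<and>
     (\<forall>x\<in>a m. \<forall>x'\<in>a m. x \<noteq> x' \<longrightarrow>
        (\<forall>u\<in>T closure_of (fst (snd (h x))). \<forall>w\<in>T closure_of (fst (snd (h x'))). \<not> G u w))"
      using fps[of m] unfolding psa fits_def fst_conv snd_conv by assumption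
  qed
  from choice[OF this] obtain hh where hh: "\<forall>m. \<tau> = hh m ` a m \<and> inj_on (hh m) (a m) \<and>
     (\<forall>x\<in>a m. x \<in> A (fst (hh m x)) \<and> x \<in> fst (snd (hh m x)) \<and> fst (snd (hh m x)) \<in> Bs \<and>
        snd (snd (hh m x)) \<in> Bs \<and> T closure_of (fst (snd (hh m x))) \<subseteq> snd (snd (hh m x)) \<and>
        snd (snd (hh m x)) \<subseteq> U m \<and> (\<forall>w\<in>A (fst (hh m x)) \<inter> fst (snd (hh m x)). \<not> G x w)) \<and>
     (\<forall>x\<in>a m. \<forall>x'\<in>a m. x \<noteq> x' \<longrightarrow>
        (\<forall>u\<in>T closure_of (fst (snd (hh m x))). \<forall>w\<in>T closure_of (fst (snd (hh m x'))). \<not> G u w))"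
    ..
  have hh1: "\<tau> = hh m ` a m" for m using spec[OF hh, of m] by (rule conjunct1)
  have hh2: "inj_on (hh m) (a m)" for m using spec[OF hh, of m] by blast
  have hh3: "\<And>x. x \<in> a m \<Longrightarrow> x \<in> A (fst (hh m x)) \<and> x \<in> fst (snd (hh m x)) \<and> fst (snd (hh m x)) \<in> Bs \<and>
        snd (snd (hh m x)) \<in> Bs \<and> T closure_of (fst (snd (hh m x))) \<subseteq> snd (snd (hh m x)) \<and>
        snd (snd (hh m x)) \<subseteq> U m \<and> (\<forall>w\<in>A (fst (hh m x)) \<inter> fst (snd (hh m x)). \<not> G x w)" for m
    using conjunct1[OF conjunct2[OF conjunct2[OF spec[OF hh, of m]]]] by blast
  have hh4: "\<And>x x'. x \<in> a m \<Longrightarrow> x' \<in> a m \<Longrightarrow> x \<noteq> x' \<Longrightarrow>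
        (\<forall>u\<in>T closure_of (fst (snd (hh m x))). \<forall>w\<in>T closure_of (fst (snd (hh m x'))). \<not> G u w)" for m
    using conjunct2[OF conjunct2[OF conjunct2[OF spec[OF hh, of m]]]] by blast
  have aPG: "finite (a m) \<and> G_anticlique G (a m) \<and> openin T (U m) \<and> a m \<subseteq> U m" for m
    using ps[of m] unfolding psa PG_def by auto
  have aT: "a m \<subseteq> topspace T" for m using aPG[of m] openin_subset by blast
  define xx where "xx m e = inv_into (a m) (hh m) e" for m e
  have xx1: "xx m e \<in> a m" "hh m (xx m e) = e" if "e \<in> \<tau>" for m e
    using that hh1[of m] unfolding xx_def by (auto intro: inv_into_into f_inv_into_f)
  have xx2: "xx m (hh m x) = x" if "x \<in> a m" for m x
    using hh2[of m] that unfolding xx_def by (rule inv_into_f_f)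
  have fin: "finite \<tau>" using hh1[of 0] aPG[of 0] by simp
  have xxT: "xx m e \<in> topspace T" if "e \<in> \<tau>" for m e using xx1[OF that] aT by blast
  have eprops: "xx m e \<in> A (fst e) \<and> xx m e \<in> fst (snd e) \<and> fst (snd e) \<in> Bs \<and>
        snd (snd e) \<in> Bs \<and> T closure_of (fst (snd e)) \<subseteq> snd (snd e) \<and>
        snd (snd e) \<subseteq> U m" if "e \<in> \<tau>" for m e
    using hh3[OF xx1(1)[OF that, of m]] xx1(2)[OF that, of m] by simp
  obtain y where yT: "\<forall>e\<in>\<tau>. y e \<in> topspace T"
    and ycl: "\<forall>W M. (\<forall>e\<in>\<tau>. openin T (W e) \<and> y e \<in> W e) \<longrightarrow> (\<exists>m\<ge>M. \<forall>e\<in>\<tau>. xx m e \<in> W e)"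
    using cluster[OF cpt fin, of xx] xxT by blast
  have yB: "y e \<in> T closure_of (fst (snd e))" if e: "e \<in> \<tau>" for e
    unfolding in_closure_of
  proof (intro conjI allI impI)
    show "y e \<in> topspace T" using yT e by blast
    fix O' assume O': "y e \<in> O' \<and> openin T O'"
    define W where "W e' = (if e' = e then O' else topspace T)" for e'
    have "\<forall>e'\<in>\<tau>. openin T (W e') \<and> y e' \<in> W e'" unfolding W_def using O' yT by auto
    then obtain m where "\<forall>e'\<in>\<tau>. xx m e' \<in> W e'" using ycl by blast
    then have "xx m e \<in> O'" using e unfolding W_def by auto
    moreover have "xx m e \<in> fst (snd e)" using eprops[OF e] by blast
    ultimately show "\<exists>y. y \<in> fst (snd e) \<and> y \<in> O'" by blast
  qed
  have yC: "y e \<in> snd (snd e)" if e: "e \<in> \<tau>" for e using yB[OF e] eprops[OF e, of 0] by blast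
  define pstar where "pstar = (y ` \<tau>, \<Union>e\<in>\<tau>. snd (snd e))"
  have CU: "(\<Union>e\<in>\<tau>. snd (snd e)) \<subseteq> U m" for m using eprops by blast
  have yac: "G_anticlique G (y ` \<tau>)"
    unfolding G_anticlique_def
  proof (intro ballI impI)
    fix u w assume u: "u \<in> y ` \<tau>" and w: "w \<in> y ` \<tau>" and ne: "u \<noteq> w"
    obtain e where e: "e \<in> \<tau>" "u = y e" using u by blast
    obtain e' where e': "e' \<in> \<tau>" "w = y e'" using w by blast
    have "e \<noteq> e'" using e e' ne by blast
    then have "xx 0 e \<noteq> xx 0 e'" using xx1[OF e(1), of 0] xx1[OF e'(1), of 0] by metis
    then show "\<not> G u w"
      using hh4[OF xx1(1)[OF e(1)] xx1(1)[OF e'(1)]] xx1(2)[OF e(1), of 0] xx1(2)[OF e'(1), of 0]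
        yB[OF e(1)] yB[OF e'(1)] e(2) e'(2) by simp
  qed
  have pstarP: "pstar \<in> PG T G"
    unfolding pstar_def PG_def using fin yac yC eprops Bo by (auto intro!: openin_Union)
  show ?thesis
  proof (rule bexI[OF _ pstarP], intro ballI impI allI)
    fix s M assume s: "s \<in> PG T G" and sle: "PG_le s pstar"
    obtain as Us where sa: "s = (as, Us)" by (cases s)
    have sP: "finite as" "G_anticlique G as" "openin T Us" "as \<subseteq> Us" using s unfolding sa PG_def by auto
    have yas: "y ` \<tau> \<subseteq> as" and UsC: "Us \<subseteq> (\<Union>e\<in>\<tau>. snd (snd e))"
      using sle unfolding sa pstar_def PG_le_def by auto
    have "\<forall>e\<in>\<tau>. \<exists>N. openin T N \<and> y e \<in> N \<and> (\<forall>w\<in>N. w \<in> Us \<and> (w \<in> A (fst e) \<longrightarrow> (\<forall>z\<in>as. \<not> G z w)))"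
    proof
      fix e assume e: "e \<in> \<tau>"
      have yeT: "y e \<in> topspace T" using yT e by blast
      have yas1: "y e \<in> as" using yas e by blast
      have "\<exists>N. openin T N \<and> y e \<in> N \<and> (\<forall>z\<in>as. \<forall>w\<in>N. w \<in> A (fst e) \<longrightarrow> \<not> G z w)"
      proof (rule finite_nbhd_Inter[OF sP(1) yeT], rule ballI)
        fix z assume z: "z \<in> as"
        show "\<exists>N. openin T N \<and> y e \<in> N \<and> (\<forall>w\<in>N. w \<in> A (fst e) \<longrightarrow> \<not> G z w)"
        proof (cases "z = y e")
          case True
          have "\<forall>x\<in>topspace T. \<exists>U. openin T U \<and> x \<in> U \<and> (\<forall>w\<in>A (fst e) \<inter> U. \<not> G x w)"
            using loose[of "fst e"] unfolding G_loose_def by (rule conjunct2)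
          then obtain N where "openin T N" "y e \<in> N" "\<forall>w\<in>A (fst e) \<inter> N. \<not> G (y e) w"
            using yeT by blast
          then show ?thesis using True by blast
        next
          case False
          have zT: "z \<in> topspace T" using z sP openin_subset by blast
          have "\<not> G z (y e)" using sP(2) z yas1 False unfolding G_anticlique_def by blast
          then obtain V W where "openin T V" "openin T W" "z \<in> V" "y e \<in> W" "\<forall>u\<in>V. \<forall>w\<in>W. \<not> G u w"
            using nonedge_nbhd[OF cg zT yeT False] by blast
          then show ?thesis by blast
        qed
      qed
      then obtain N where N: "openin T N" "y e \<in> N" "\<forall>z\<in>as. \<forall>w\<in>N. w \<in> A (fst e) \<longrightarrow> \<not> G z w"
        by blast
      have "y e \<in> Us" using yas1 sP(4) by blast
      then show "\<exists>N. openin T N \<and> y e \<in> N \<and> (\<forall>w\<in>N. w \<in> Us \<and> (w \<in> A (fst e) \<longrightarrow> (\<forall>z\<in>as. \<not> G z w)))"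
        using N sP(3) by (intro exI[of _ "N \<inter> Us"]) auto
    qed
    then have "\<exists>NN. \<forall>e\<in>\<tau>. openin T (NN e) \<and> y e \<in> NN e \<and> (\<forall>w\<in>NN e. w \<in> Us \<and> (w \<in> A (fst e) \<longrightarrow> (\<forall>z\<in>as. \<not> G z w)))"
      by (rule bchoice)
    then obtain NN where NN: "\<forall>e\<in>\<tau>. openin T (NN e) \<and> y e \<in> NN e \<and> (\<forall>w\<in>NN e. w \<in> Us \<and> (w \<in> A (fst e) \<longrightarrow> (\<forall>z\<in>as. \<not> G z w)))"
      by blast
    have "\<forall>e\<in>\<tau>. openin T (NN e) \<and> y e \<in> NN e" using NN by blast
    then obtain m where m: "m \<ge> M" "\<forall>e\<in>\<tau>. xx m e \<in> NN e" using ycl by blast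
    have pt: "x \<in> Us \<and> (\<forall>z\<in>as. \<not> G z x)" if x: "x \<in> a m" for x
    proof -
      have e: "hh m x \<in> \<tau>" using hh1[of m] x by blast
      have xe: "xx m (hh m x) = x" using xx2[OF x] .
      have "x \<in> NN (hh m x)" using m(2) e xe by metis
      moreover have "x \<in> A (fst (hh m x))" using hh3[OF x] by blast
      ultimately show ?thesis using NN e by blast
    qed
    have "compatible (PG T G) PG_le (as, Us) (a m, U m)"
    proof (rule compat_PG)
      show "(as, Us) \<in> PG T G" using s sa by simp
      show "(a m, U m) \<in> PG T G" using ps[of m] psa by simp
      show "as \<subseteq> U m" using sP(4) UsC CU[of m] by blast
      show "a m \<subseteq> Us" using pt by blast
      show "G_anticlique G (as \<union> a m)"
        unfolding G_anticlique_def
      proof (intro ballI impI)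
        fix u w assume u: "u \<in> as \<union> a m" and w: "w \<in> as \<union> a m" and ne: "u \<noteq> w"
        show "\<not> G u w"
        proof (cases "u \<in> as")
          case True
          show ?thesis
          proof (cases "w \<in> as")
            case True
            then show ?thesis using sP(2) \<open>u \<in> as\<close> ne unfolding G_anticlique_def by blast
          next
            case False
            then have "w \<in> a m" using w by blast
            then show ?thesis using pt \<open>u \<in> as\<close> by blast
          qed
        next
          case False
          then have um: "u \<in> a m" using u by blast
          show ?thesis
          proof (cases "w \<in> as")
            case True
            then show ?thesis using pt[OF um] Gsym by blast
          next
            case False
            then have "w \<in> a m" using w by blast
            then show ?thesis using aPG[of m] um ne unfolding G_anticlique_def by blast
          qed
        qed
      qed
    qed
    then show "\<exists>m'\<ge>M. compatible (PG T G) PG_le s (ps m')" using m(1) sa psa by metis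
  qed
qed

end

context PGset begin

lemma PG_ccc: "ccc (PG T G) PG_le"
  unfolding ccc_def
proof (intro allI impI)
  fix Aa assume Aa: "antichain (PG T G) PG_le Aa"
  have AP: "Aa \<subseteq> PG T G" using Aa unfolding antichain_def by blast
  have "\<forall>p\<in>Aa. \<exists>\<tau>. \<tau> \<in> Ty \<and> fits p \<tau>" using fits_exists AP by blast
  then have "\<exists>f. \<forall>p\<in>Aa. f p \<in> Ty \<and> fits p (f p)" by (rule bchoice)
  then obtain f where f: "\<forall>p\<in>Aa. f p \<in> Ty \<and> fits p (f p)" ..
  have "inj_on f Aa"
  proof (rule inj_onI)
    fix p q assume p: "p \<in> Aa" and q: "q \<in> Aa" and fe: "f p = f q"
    show "p = q"
    proof (rule ccontr)
      assume "p \<noteq> q"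
      then have "\<not> compatible (PG T G) PG_le p q" using Aa p q unfolding antichain_def by blast
      moreover have "compatible (PG T G) PG_le p q"
      proof -
        have fp: "fits p (f p)" using f p by blast
        have fq: "fits q (f p)" using f q fe by metis
        show ?thesis using fits_compat[OF _ _ fp fq] AP p q by blast
      qed
      ultimately show False by blast
    qed
  qed
  moreover have "countable (f ` Aa)"
    using f Ty_countable by (meson countable_subset image_subsetI)
  ultimately show "countable Aa" using countable_image_inj_on by blast
qed

lemma PG_no_dom: "\<not> adds_dominating_real (PG T G) PG_le"
proof
  let ?P = "PG T G"
  assume "adds_dominating_real ?P PG_le"
  then obtain \<sigma> q where rn: "real_name ?P PG_le \<sigma>" and q: "q \<in> ?P"
    and qd: "\<forall>g. forces_dominates ?P PG_le q \<sigma> g"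
    unfolding adds_dominating_real_def by blast
  have pred: "\<forall>n. \<forall>r\<in>?P. \<exists>s\<in>?P. PG_le s r \<and> (\<exists>m. \<exists>t\<in>\<sigma> n m. PG_le s t)"
    using rn unfolding real_name_def by blast
  have inc: "\<forall>n m m'. m \<noteq> m' \<longrightarrow> (\<forall>p\<in>\<sigma> n m. \<forall>p'\<in>\<sigma> n m'. \<not> compatible ?P PG_le p p')"
    using rn unfolding real_name_def by blast
  define tt where "tt = from_nat_into Ty"
  have ttr: "range tt = Ty" unfolding tt_def using Ty_ne Ty_countable by simp
  have bnd: "\<exists>b. \<forall>p\<in>?P. fits p (tt k) \<longrightarrow> (\<exists>r\<in>?P. PG_le r p \<and> (\<exists>m0\<le>b. \<exists>t\<in>\<sigma> n m0. PG_le r t))"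
    for k n
  proof (rule ccontr)
    assume "\<not> ?thesis"
    then have "\<forall>b. \<exists>p. p \<in> ?P \<and> fits p (tt k) \<and> \<not> (\<exists>r\<in>?P. PG_le r p \<and> (\<exists>m0\<le>b. \<exists>t\<in>\<sigma> n m0. PG_le r t))"
      by blast
    from choice[OF this] obtain ps where ps: "\<forall>b. ps b \<in> ?P \<and> fits (ps b) (tt k) \<and> \<not> (\<exists>r\<in>?P. PG_le r (ps b) \<and> (\<exists>m0\<le>b. \<exists>t\<in>\<sigma> n m0. PG_le r t))"
      ..
    obtain pst where pst: "pst \<in> ?P"
      and pstc: "\<forall>s\<in>?P. PG_le s pst \<longrightarrow> (\<forall>M. \<exists>m\<ge>M. compatible ?P PG_le s (ps m))"
      using fits_limit[of ps "tt k"] ps by blast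
    obtain s m0 t0 where s: "s \<in> ?P" "PG_le s pst" and t0: "t0 \<in> \<sigma> n m0" "PG_le s t0"
      using pred pst by blast
    obtain m where m: "m \<ge> m0" "compatible ?P PG_le s (ps m)" using pstc s by blast
    obtain r where r: "r \<in> ?P" "PG_le r s" "PG_le r (ps m)"
      using m(2) unfolding compatible_def by blast
    have "PG_le r t0" using r(2) t0(2) PG_le_trans by blast
    moreover have "\<not> (\<exists>r\<in>?P. PG_le r (ps m) \<and> (\<exists>m0'\<le>m. \<exists>t\<in>\<sigma> n m0'. PG_le r t))"
      using ps by blast
    ultimately show False using r(1) r(3) m(1) t0(1) by blast
  qed
  have "\<forall>k. \<exists>f. \<forall>n. \<forall>p\<in>?P. fits p (tt k) \<longrightarrow> (\<exists>r\<in>?P. PG_le r p \<and> (\<exists>m0\<le>f n. \<exists>t\<in>\<sigma> n m0. PG_le r t))"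
  proof
    fix k
    have "\<forall>n. \<exists>b. \<forall>p\<in>?P. fits p (tt k) \<longrightarrow> (\<exists>r\<in>?P. PG_le r p \<and> (\<exists>m0\<le>b. \<exists>t\<in>\<sigma> n m0. PG_le r t))"
      using bnd by (intro allI)
    from choice[OF this] show "\<exists>f. \<forall>n. \<forall>p\<in>?P. fits p (tt k) \<longrightarrow> (\<exists>r\<in>?P. PG_le r p \<and> (\<exists>m0\<le>f n. \<exists>t\<in>\<sigma> n m0. PG_le r t))" .
  qed
  from choice[OF this] obtain bb where bb: "\<forall>k n. \<forall>p\<in>?P. fits p (tt k) \<longrightarrow> (\<exists>r\<in>?P. PG_le r p \<and> (\<exists>m0\<le>bb k n. \<exists>t\<in>\<sigma> n m0. PG_le r t))"
    ..
  define g where "g n = Suc (\<Sum>k\<le>n. bb k n)" for n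
  have "forces_dominates ?P PG_le q \<sigma> g" using qd by (rule spec)
  then have fd: "\<forall>r\<in>?P. PG_le r q \<longrightarrow> (\<exists>s\<in>?P. PG_le s r \<and> (\<exists>N. \<forall>n\<ge>N. forces_ge ?P PG_le s \<sigma> n (g n)))"
    unfolding forces_dominates_def .
  have "\<exists>s\<in>?P. PG_le s q \<and> (\<exists>N. \<forall>n\<ge>N. forces_ge ?P PG_le s \<sigma> n (g n))"
    using mp[OF bspec[OF fd q] PG_le_refl] .
  then obtain s N where s: "s \<in> ?P" "PG_le s q" and sN: "\<forall>n\<ge>N. forces_ge ?P PG_le s \<sigma> n (g n)"
    by blast
  obtain \<tau> where \<tau>: "\<tau> \<in> Ty" "fits s \<tau>" using fits_exists[OF s(1)] by blast
  have "\<tau> \<in> range tt" using ttr \<tau>(1) by simp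
  then obtain k where k0: "\<tau> = tt k" by (rule rangeE)
  then have k: "tt k = \<tau>" by simp
  define n where "n = max N k"
  have bbn: "bb k n < g n"
  proof -
    have "bb k n \<le> (\<Sum>k\<le>n. bb k n)" by (rule member_le_sum) (auto simp: n_def)
    then show ?thesis unfolding g_def by simp
  qed
  obtain r m0 t0 where r: "r \<in> ?P" "PG_le r s" and m0: "m0 \<le> bb k n" and t0: "t0 \<in> \<sigma> n m0" "PG_le r t0"
  proof -
    have "fits s (tt k)" using \<tau>(2) k by simp
    then have "\<exists>r\<in>?P. PG_le r s \<and> (\<exists>m0\<le>bb k n. \<exists>t\<in>\<sigma> n m0. PG_le r t)"
      using bb[rule_format, of s k n] s(1) by blast
    then show ?thesis using that by blast
  qed
  have "forces_ge ?P PG_le s \<sigma> n (g n)" using sN unfolding n_def by simp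
  then have fg: "\<forall>r\<in>?P. PG_le r s \<longrightarrow> (\<exists>s'\<in>?P. PG_le s' r \<and> (\<exists>m\<ge>g n. \<exists>t\<in>\<sigma> n m. PG_le s' t))"
    unfolding forces_ge_def .
  have "\<exists>s'\<in>?P. PG_le s' r \<and> (\<exists>m\<ge>g n. \<exists>t\<in>\<sigma> n m. PG_le s' t)"
    using mp[OF bspec[OF fg r(1)] r(2)] .
  then obtain s' m t where s': "s' \<in> ?P" "PG_le s' r" and m: "m \<ge> g n" and t: "t \<in> \<sigma> n m" "PG_le s' t"
    by blast
  have "compatible ?P PG_le t0 t"
    unfolding compatible_def using s' t PG_le_trans[OF s'(2) t0(2)] by blast
  moreover have "m0 \<noteq> m" using m0 m bbn by simp
  ultimately show False using inc t0(1) t(1) by blast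
qed

end

theorem corollary3p9:
  fixes T :: "'a topology" and G :: "'a \<Rightarrow> 'a \<Rightarrow> bool"
  assumes "compact_space T" and "metrizable_space T"
    and "closed_graph T G"
    and "\<exists>A :: nat \<Rightarrow> 'a set. (\<forall>n. G_loose T G (A n)) \<and> topspace T = (\<Union>n. A n)"
  shows "ccc (PG T G) PG_le \<and> \<not> adds_dominating_real (PG T G) PG_le"
proof -
  obtain A :: "nat \<Rightarrow> 'a set" where A: "\<forall>n. G_loose T G (A n)" "topspace T = (\<Union>n. A n)"
    using assms(4) by blast
  obtain M d where Md: "Metric_space M d" "T = Metric_space.mtopology M d"
    using assms(2) unfolding metrizable_space_def by blast
  have "second_countable T"
    using Metric_space.compact_imp_second_countable[OF Md(1)] assms(1) Md(2) by simp
  then obtain Bs where Bs: "countable Bs" "\<forall>V\<in>Bs. openin T V"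
    "\<forall>U x. openin T U \<and> x \<in> U \<longrightarrow> (\<exists>V\<in>Bs. x \<in> V \<and> V \<subseteq> U)"
    unfolding second_countable_def by blast
  interpret PGset T G A Bs
  proof
    show "compact_space T" by (rule assms(1))
    show "regular_space T" using assms(2) by (rule metrizable_imp_regular_space)
    show "t1_space T" using assms(2) metrizable_imp_Hausdorff_space Hausdorff_imp_t1_space by blast
    show "closed_graph T G" by (rule assms(3))
    show "\<And>n. G_loose T G (A n)" using A by blast
    show "topspace T = (\<Union>n. A n)" by (rule A(2))
    show "countable Bs" by (rule Bs(1))
    show "\<And>V. V \<in> Bs \<Longrightarrow> openin T V" using Bs(2) by blast
    show "\<And>U x. openin T U \<Longrightarrow> x \<in> U \<Longrightarrow> \<exists>V\<in>Bs. x \<in> V \<and> V \<subseteq> U" using Bs(3) by blast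
  qed
  show ?thesis using PG_ccc PG_no_dom by blast
qed

end
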